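(* For every object $\bar d=\{1,\dots,d\}$ of the augmented simplex category, the following assignment on generators defines an opposite $\mathcal{S}$-bialgebra structure, i.e. a prop morphism $\mathcal{S}\to\mathrm{End}^{\mathrm{op}}(\mathrm{C}^a_\bullet(\Delta^d_+))$, natural with respect to augmented simplicial maps: (i) $\varepsilon\mapsto$ the map in $\mathrm{Hom}(k,\mathrm{C}^a_\bullet(\Delta^d_+))_0$ given by $1\mapsto[\emptyset]$; (ii) $\Delta\mapsto$ the join map in $\mathrm{Hom}(\mathrm{C}^a_\bullet(\Delta^d_+)^{\otimes2},\mathrm{C}^a_\bullet(\Delta^d_+))_0$, $[v_0,\dots,v_p]\otimes[v_{p+1},\dots,v_q]\mapsto\mathrm{sign}(\pi)\,[v_{\pi(0)},\dots,v_{\pi(q)}]$ if the vertices are pairwise distinct and $\mapsto0$ otherwise, where $\pi$ is the permutation ordering the vertices increasingly; (iii) $\mu\mapsto$ the map in $\mathrm{Hom}(\mathrm{C}^a_\bullet(\Delta^d_+),\mathrm{C}^a_\bullet(\Delta^d_+)^{\otimes2})_1$, $[v_0,\dots,v_q]\mapsto\sum_{i=0}^q(-1)^i[v_0,\dots,v_i]\otimes[v_i,\dots,v_q]$ (and $[\emptyset]\mapsto0$).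
   Context: Fix a commutative ring $k$; chain complexes over $k$ with the Koszul sign rule. A prop $\mathcal{P}$ is a strict symmetric monoidal category enriched in chain complexes generated by one object, $\mathcal{P}(n,m)$ the complex of morphisms from $n$ to $m$ copies; $\circ$ vertical, $\otimes$ horizontal composition, $\mathrm{id}\in\mathcal{P}(1,1)$. For a chain complex $C$, $\mathrm{End}^{\mathrm{op}}(C)$ is the prop with $\mathrm{End}^{\mathrm{op}}(C)(n,m)=\mathrm{Hom}(C^{\otimes m},C^{\otimes n})$ (Hom complex with $(\partial f)=\partial\circ f-(-1)^{|f|}f\circ\partial$); a prop morphism $\mathcal{P}\to\mathrm{End}^{\mathrm{op}}(C)$ is an opposite $\mathcal{P}$-bialgebra. The prop $\mathcal{S}$: free prop on the free $\Sigma$-bimodule generated by $\varepsilon\in\mathcal{S}(1,0)_0$, $\Delta\in\mathcal{S}(1,2)_0$, $\mu\in\mathcal{S}(2,1)_1$, with derivation differential $\partial\varepsilon=0$, $\partial\Delta=0$, $\partial\mu=(\varepsilon\otimes\mathrm{id})-(\mathrm{id}\otimes\varepsilon)$, modulo the dg prop ideal generated by $\varepsilon\circ\mu$, $(\varepsilon\otimes\mathrm{id})\circ\Delta-\mathrm{id}$, $(\mathrm{id}\otimes\varepsilon)\circ\Delta-\mathrm{id}$. The augmented simplex category $\Delta_+$ has objects $\bar0=\emptyset,\bar1=\{1\},\bar2=\{1,2\},\dots$ and order-preserving maps. $\mathrm{C}^a_\bullet(\Delta^d_+)$ is the normalized augmented chain complex of the standard augmented simplex on $\bar d$: basis the symbols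 $[v_0,\dots,v_q]$ for strictly increasing sequences of elements of $\bar d$, including the empty simplex $[\emptyset]$, graded by cardinality (so $[\emptyset]$ has degree $0$ and $[v_0,\dots,v_q]$ degree $q+1$), symbols with repeated vertices being $0$, with differential $\partial[v_0,\dots,v_q]=\sum_i(-1)^i[v_0,\dots,\widehat{v_i},\dots,v_q]$, in particular $\partial[v]=[\emptyset]$. Naturality means compatibility with the chain maps induced by order-preserving maps $\bar d\to\bar e$. *)

theory Defs
  imports Main
begin

text \<open>Concrete model of the normalized augmented chain complex of the standard augmented
simplex on the ordered set {1..d}. A simplex [v_0,...,v_q] (strictly increasing) is encoded by
its vertex set; the empty set is the empty simplex [emptyset] (degree 0); the degree of a
simplex is the cardinality of its vertex set. The tensor square is the free module on pairs of
simplices, i.e. coefficient functions on pairs. The ground ring k, viewed as the complex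
concentrated in degree 0 (zero differential), is encoded as functions unit => k.\<close>

type_synonym 'k chain = "nat set \<Rightarrow> 'k"
type_synonym 'k chain2 = "nat set \<times> nat set \<Rightarrow> 'k"

definition verts :: "nat \<Rightarrow> nat set" where
  "verts d = {1..d}"

definition simplices :: "nat \<Rightarrow> nat set set" where
  "simplices d = Pow (verts d)"

definition simplices2 :: "nat \<Rightarrow> (nat set \<times> nat set) set" where
  "simplices2 d = simplices d \<times> simplices d"

definition chains :: "nat \<Rightarrow> ('k::zero) chain set" where
  "chains d = {x. \<forall>S. x S \<noteq> 0 \<longrightarrow> S \<in> simplices d}"

definition chains2 :: "nat \<Rightarrow> ('k::zero) chain2 set" where
  "chains2 d = {y. \<forall>p. y p \<noteq> 0 \<longrightarrow> p \<in> simplices2 d}"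

definition lin_ext :: "'a set \<Rightarrow> ('a \<Rightarrow> 'b \<Rightarrow> 'k::comm_ring_1) \<Rightarrow> ('a \<Rightarrow> 'k) \<Rightarrow> ('b \<Rightarrow> 'k)" where
  "lin_ext I F x = (\<lambda>t. \<Sum>s\<in>I. x s * F s t)"

text \<open>(-1)^i where v = v_i is the i-th vertex (0-based) of the simplex S.\<close>
definition face_sign :: "nat set \<Rightarrow> nat \<Rightarrow> 'k::comm_ring_1" where
  "face_sign S v = (-1) ^ card {u\<in>S. u < v}"

definition bd_basis :: "nat set \<Rightarrow> ('k::comm_ring_1) chain" where
  "bd_basis S = (\<lambda>T. \<Sum>v\<in>S. if T = S - {v} then face_sign S v else 0)"

definition bd :: "nat \<Rightarrow> ('k::comm_ring_1) chain \<Rightarrow> 'k chain" where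
  "bd d = lin_ext (simplices d) bd_basis"

text \<open>Differential of the tensor square, Koszul sign rule:
  d(a (x) b) = da (x) b + (-1)^|a| a (x) db.\<close>
definition bd2_basis :: "nat set \<times> nat set \<Rightarrow> ('k::comm_ring_1) chain2" where
  "bd2_basis p = (\<lambda>q. (if snd q = snd p then bd_basis (fst p) (fst q) else 0)
      + (-1) ^ card (fst p) * (if fst q = fst p then bd_basis (snd p) (snd q) else 0))"

definition bd2 :: "nat \<Rightarrow> ('k::comm_ring_1) chain2 \<Rightarrow> 'k chain2" where
  "bd2 d = lin_ext (simplices2 d) bd2_basis"

definition hom_diff ::
  "(('b \<Rightarrow> 'k::comm_ring_1) \<Rightarrow> ('b \<Rightarrow> 'k)) \<Rightarrow> (('a \<Rightarrow> 'k) \<Rightarrow> ('a \<Rightarrow> 'k)) \<Rightarrow> nat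
     \<Rightarrow> (('a \<Rightarrow> 'k) \<Rightarrow> ('b \<Rightarrow> 'k)) \<Rightarrow> (('a \<Rightarrow> 'k) \<Rightarrow> ('b \<Rightarrow> 'k))" where
  "hom_diff dY dX deg f = (\<lambda>x t. dY (f x) t - (-1) ^ deg * f (dX x) t)"

definition eps_map :: "(unit \<Rightarrow> 'k::comm_ring_1) \<Rightarrow> 'k chain" where
  "eps_map c = (\<lambda>T. if T = {} then c () else 0)"

text \<open>The sign of the permutation pi sorting the concatenated
sequence is (-1)^(number of inversions) = (-1)^#{(a,b) in A x B. b < a}.\<close>
definition join_basis :: "nat set \<times> nat set \<Rightarrow> ('k::comm_ring_1) chain" where
  "join_basis p = (\<lambda>T. if fst p \<inter> snd p = {} \<and> T = fst p \<union> snd p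
      then (-1) ^ card {(a, b). a \<in> fst p \<and> b \<in> snd p \<and> b < a} else 0)"

definition join :: "nat \<Rightarrow> ('k::comm_ring_1) chain2 \<Rightarrow> 'k chain" where
  "join d = lin_ext (simplices2 d) join_basis"

definition coprod_basis :: "nat set \<Rightarrow> ('k::comm_ring_1) chain2" where
  "coprod_basis S = (\<lambda>q. \<Sum>v\<in>S. if fst q = {u\<in>S. u \<le> v} \<and> snd q = {u\<in>S. v \<le> u}
      then face_sign S v else 0)"

definition coprod :: "nat \<Rightarrow> ('k::comm_ring_1) chain \<Rightarrow> 'k chain2" where
  "coprod d = lin_ext (simplices d) coprod_basis"

definition eps_tensor_id :: "('k::comm_ring_1) chain \<Rightarrow> 'k chain2" where
  "eps_tensor_id x = (\<lambda>q. if fst q = {} then x (snd q) else 0)"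

definition id_tensor_eps :: "('k::comm_ring_1) chain \<Rightarrow> 'k chain2" where
  "id_tensor_eps x = (\<lambda>q. if snd q = {} then x (fst q) else 0)"

text \<open>Morphisms of the augmented simplex category from d to e: order-preserving maps
{1..d} -> {1..e}, and the induced chain maps (degenerate images are 0).\<close>
definition aug_simplicial_map :: "nat \<Rightarrow> nat \<Rightarrow> (nat \<Rightarrow> nat) \<Rightarrow> bool" where
  "aug_simplicial_map d e f \<longleftrightarrow> f ` verts d \<subseteq> verts e \<and> mono_on (verts d) f"

definition push_basis :: "(nat \<Rightarrow> nat) \<Rightarrow> nat set \<Rightarrow> ('k::comm_ring_1) chain" where
  "push_basis f S = (\<lambda>T. if inj_on f S \<and> T = f ` S then 1 else 0)"

definition push :: "nat \<Rightarrow> (nat \<Rightarrow> nat) \<Rightarrow> ('k::comm_ring_1) chain \<Rightarrow> 'k chain" where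
  "push d f = lin_ext (simplices d) (push_basis f)"

definition push2 :: "nat \<Rightarrow> (nat \<Rightarrow> nat) \<Rightarrow> ('k::comm_ring_1) chain2 \<Rightarrow> 'k chain2" where
  "push2 d f = lin_ext (simplices2 d)
     (\<lambda>p q. push_basis f (fst p) (fst q) * push_basis f (snd p) (snd q))"

end

theory Submission
  imports Defs
begin

lemma fin_simp[simp]: "finite (simplices d)"
  by (simp add: simplices_def verts_def)
lemma fin_simp2[simp]: "finite (simplices2 d)"
  by (simp add: simplices2_def)
lemma simp_fin: "S \<in> simplices d \<Longrightarrow> finite S"
  by (auto simp: simplices_def verts_def intro: finite_subset)

lemma lin_ext_comp:
  "lin_ext J G (lin_ext I F x) = lin_ext I (\<lambda>i. lin_ext J G (F i)) x"
  unfolding lin_ext_def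
  by (rule ext) (simp add: sum_distrib_left sum_distrib_right sum.swap[of _ J] mult.assoc)

lemma lin_ext_cong: "(\<And>i. i \<in> I \<Longrightarrow> F i = G i) \<Longrightarrow> lin_ext I F x = lin_ext I G x"
  unfolding lin_ext_def by (rule ext) (auto intro: sum.cong)

lemma pull:
  assumes "finite I" "h ` V \<subseteq> I"
  shows "(\<Sum>p\<in>I. (\<Sum>v\<in>V. if p = h v then c v else 0) * G p) = (\<Sum>v\<in>V. c v * (G (h v)::'k::comm_ring_1))"
proof -
  have "(\<Sum>p\<in>I. (\<Sum>v\<in>V. if p = h v then c v else 0) * G p)
      = (\<Sum>p\<in>I. \<Sum>v\<in>V. if p = h v then c v * G p else 0)"
    unfolding sum_distrib_right by (intro sum.cong refl) simp
  also have "\<dots> = (\<Sum>v\<in>V. \<Sum>p\<in>I. if p = h v then c v * G p else 0)"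
    by (rule sum.swap)
  also have "\<dots> = (\<Sum>v\<in>V. c v * G (h v))"
    using assms by (intro sum.cong) (auto simp: sum.delta)
  finally show ?thesis .
qed

lemma delta_mult:
  assumes "finite I" "a \<in> I"
  shows "(\<Sum>p\<in>I. (if p = a then c else 0) * G p) = c * (G a::'k::comm_ring_1)"
  using pull[OF assms(1), of "\<lambda>_. a" "{()}" "\<lambda>_. c" G] assms by simp

lemma sum_indic_inj:
  assumes "finite S" "inj_on h S"
  shows "(\<Sum>v\<in>S. if q = h v then (c::'k::comm_ring_1) else 0) = (if q \<in> h ` S then c else 0)"
proof (cases "q \<in> h ` S")
  case True
  then obtain v0 where v0: "v0 \<in> S" "q = h v0" by auto
  have "(\<Sum>v\<in>S. if q = h v then c else 0) = (\<Sum>v\<in>S. if v = v0 then c else 0)"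
    using assms(2) v0 by (intro sum.cong) (auto dest: inj_onD)
  then show ?thesis using v0 assms(1) by simp
next
  case False
  then show ?thesis by (auto intro!: sum.neutral)
qed

lemma neg1_eq: "even m = even n \<Longrightarrow> (-1::'k::comm_ring_1) ^ m = (-1) ^ n"
  by (simp add: minus_one_power_iff)

lemma c1: "eps_map c T \<noteq> 0 \<Longrightarrow> card T = 0"
  by (simp add: eps_map_def split: if_splits)

lemma c2: "p \<in> simplices2 d \<Longrightarrow> (join_basis p T :: 'k::comm_ring_1) \<noteq> 0 \<Longrightarrow> card T = card (fst p) + card (snd p)"
  by (cases p) (auto simp: join_basis_def simplices2_def simp_fin card_Un_disjoint split: if_splits)

lemma c3:
  assumes "S \<in> simplices d" "(coprod_basis S q :: 'k::comm_ring_1) \<noteq> 0"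
  shows "card (fst q) + card (snd q) = card S + 1"
proof -
  from assms(2) obtain v where "v \<in> S" "(if fst q = {u\<in>S. u \<le> v} \<and> snd q = {u\<in>S. v \<le> u}
      then face_sign S v else 0::'k) \<noteq> 0"
    unfolding coprod_basis_def by (rule sum.not_neutral_contains_not_neutral)
  then have v: "v \<in> S" "fst q = {u\<in>S. u \<le> v}" "snd q = {u\<in>S. v \<le> u}"
    by (auto split: if_splits)
  have f: "finite S" using assms(1) simp_fin by blast
  have "card (fst q) + card (snd q) = card (fst q \<union> snd q) + card (fst q \<inter> snd q)"
    using f v by (intro card_Un_Int) auto
  moreover have "fst q \<union> snd q = S" using v by auto
  moreover have "fst q \<inter> snd q = {v}" using v by auto
  ultimately show ?thesis by simp
qed

lemma bd_basis_empty: "bd_basis {} = (\<lambda>_. 0)"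
  by (simp add: bd_basis_def)

lemma empty_simp[simp]: "{} \<in> simplices d"
  by (simp add: simplices_def)

lemma lin_ext_eps: "lin_ext (simplices d) F (eps_map c) = (\<lambda>t. c () * F {} t)"
  unfolding lin_ext_def eps_map_def
  using delta_mult[of "simplices d" "{}" "c ()"] by simp

lemma c4: "hom_diff (bd d) (\<lambda>c. \<lambda>_. 0) 0 eps_map c = (\<lambda>_. 0)"
  unfolding hom_diff_def bd_def lin_ext_eps by (simp add: bd_basis_empty eps_map_def)

lemma c7: "coprod d (eps_map c) = (\<lambda>_. 0)"
  unfolding coprod_def lin_ext_eps by (simp add: coprod_basis_def)

lemma n1: "push d f (eps_map c) = eps_map c"
  unfolding push_def lin_ext_eps by (auto simp: push_basis_def eps_map_def)

lemma sum_simp2: "(\<Sum>p\<in>simplices2 d. g p) = (\<Sum>a\<in>simplices d. \<Sum>b\<in>simplices d. g (a, b))"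
  unfolding simplices2_def by (simp add: sum.cartesian_product split_def)

lemma chains_out: "x \<in> chains d \<Longrightarrow> T \<notin> simplices d \<Longrightarrow> x T = 0"
  by (auto simp: chains_def)

lemma c8:
  assumes "x \<in> chains d"
  shows "join d (eps_tensor_id x) = x"
proof
  fix T
  have "join d (eps_tensor_id x) T = (\<Sum>b\<in>simplices d. x b * (if T = b then 1 else 0))"
    unfolding join_def lin_ext_def sum_simp2
    by (subst sum.remove[of _ "{}"]) (auto simp: eps_tensor_id_def join_basis_def intro!: sum.cong)
  also have "\<dots> = x T" using chains_out[OF assms, of T] by (simp add: if_distrib cong: if_cong)
  finally show "join d (eps_tensor_id x) T = x T" .
qed

lemma c9:
  assumes "x \<in> chains d"
  shows "join d (id_tensor_eps x) = x"
proof
  fix T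
  have "join d (id_tensor_eps x) T = (\<Sum>a\<in>simplices d. x a * (if T = a then 1 else 0))"
    unfolding join_def lin_ext_def sum_simp2
    by (intro sum.cong refl, subst sum.remove[of _ "{}"]) (auto simp: id_tensor_eps_def join_basis_def intro!: sum.neutral)
  also have "\<dots> = x T" using chains_out[OF assms, of T] by (simp add: if_distrib cong: if_cong)
  finally show "join d (id_tensor_eps x) T = x T" .
qed

definition ninv :: "nat set \<Rightarrow> nat set \<Rightarrow> nat" where
  "ninv X Y = card {(a, b). a \<in> X \<and> b \<in> Y \<and> b < a}"

lemma join_basis_eq: "join_basis (X, Y) t = (if X \<inter> Y = {} \<and> t = X \<union> Y then (-1) ^ ninv X Y else 0)"
  by (simp add: join_basis_def ninv_def)

lemma ninv_fin: "finite A \<Longrightarrow> finite B \<Longrightarrow> finite {(a, b). a \<in> A \<and> b \<in> B \<and> b < a}"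
  by (rule finite_subset[of _ "A \<times> B"]) auto

lemma N1:
  assumes "finite A" "finite B" "w \<in> A"
  shows "ninv A B = ninv (A - {w}) B + card {b\<in>B. b < w}"
proof -
  have e: "{(a, b). a \<in> A \<and> b \<in> B \<and> b < a} = {(a, b). a \<in> A - {w} \<and> b \<in> B \<and> b < a} \<union> Pair w ` {b\<in>B. b < w}"
    using assms by auto
  have "card ({(a, b). a \<in> A - {w} \<and> b \<in> B \<and> b < a} \<union> Pair w ` {b\<in>B. b < w})
     = card {(a, b). a \<in> A - {w} \<and> b \<in> B \<and> b < a} + card (Pair w ` {b\<in>B. b < w})"
    using assms by (intro card_Un_disjoint ninv_fin) auto
  moreover have "card (Pair w ` {b\<in>B. b < w}) = card {b\<in>B. b < w}"
    by (rule card_image) (auto simp: inj_on_def)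
  ultimately show ?thesis unfolding ninv_def e by simp
qed

lemma N2:
  assumes "finite A" "finite B" "w \<in> B"
  shows "ninv A B = ninv A (B - {w}) + card {a\<in>A. w < a}"
proof -
  have e: "{(a, b). a \<in> A \<and> b \<in> B \<and> b < a} = {(a, b). a \<in> A \<and> b \<in> B - {w} \<and> b < a} \<union> (\<lambda>a. (a, w)) ` {a\<in>A. w < a}"
    using assms by auto
  have "card ({(a, b). a \<in> A \<and> b \<in> B - {w} \<and> b < a} \<union> (\<lambda>a. (a, w)) ` {a\<in>A. w < a})
     = card {(a, b). a \<in> A \<and> b \<in> B - {w} \<and> b < a} + card ((\<lambda>a. (a, w)) ` {a\<in>A. w < a})"
    using assms by (intro card_Un_disjoint ninv_fin) auto
  moreover have "card ((\<lambda>a. (a, w)) ` {a\<in>A. w < a}) = card {a\<in>A. w < a}"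
    by (rule card_image) (auto simp: inj_on_def)
  ultimately show ?thesis unfolding ninv_def e by simp
qed

lemma F1:
  assumes "finite (A::nat set)" "finite B" "A \<inter> B = {}"
  shows "card {u\<in>A \<union> B. u < v} = card {u\<in>A. u < v} + card {u\<in>B. u < v}"
proof -
  have "{u\<in>A \<union> B. u < v} = {u\<in>A. u < v} \<union> {u\<in>B. u < v}" by auto
  then show ?thesis using assms by (simp add: card_Un_disjoint disjoint_iff)
qed

lemma F2:
  assumes "finite (A::nat set)"
  shows "card A = card {a\<in>A. a < w} + card {a\<in>A. w < a} + (if w \<in> A then 1 else 0)"
proof -
  have e: "A = ({a\<in>A. a < w} \<union> {a\<in>A. w < a}) \<union> (A \<inter> {w})" using less_linear[of _ w] by blast
  have "card A = card ({a\<in>A. a < w} \<union> {a\<in>A. w < a}) + card (A \<inter> {w})"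
    using assms by (subst e, intro card_Un_disjoint) auto
  also have "card ({a\<in>A. a < w} \<union> {a\<in>A. w < a}) = card {a\<in>A. a < w} + card {a\<in>A. w < a}"
    using assms by (intro card_Un_disjoint) auto
  finally show ?thesis by auto
qed

lemma neg1_opp: "even m \<noteq> even n \<Longrightarrow> (-1::'k::comm_ring_1) ^ m + (-1) ^ n = 0"
  by (auto simp: minus_one_power_iff)

lemma join_bd_basis:
  assumes fA: "finite A" and fB: "finite B"
  shows "(if A \<inter> B = {} then (-1) ^ ninv A B * bd_basis (A \<union> B) t else (0::'k::comm_ring_1))
    = (\<Sum>v\<in>A. face_sign A v * join_basis (A - {v}, B) t)
      + (-1) ^ card A * (\<Sum>v\<in>B. face_sign B v * join_basis (A, B - {v}) t)"
proof (cases "A \<inter> B = {}")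
  case True
  have "(-1) ^ ninv A B * bd_basis (A \<union> B) t
      = (\<Sum>v\<in>A \<union> B. if t = A \<union> B - {v} then (-1) ^ ninv A B * face_sign (A \<union> B) v else (0::'k))"
    unfolding bd_basis_def sum_distrib_left by (intro sum.cong) auto
  also have "\<dots> = (\<Sum>v\<in>A. if t = A \<union> B - {v} then (-1) ^ ninv A B * face_sign (A \<union> B) v else (0::'k))
     + (\<Sum>v\<in>B. if t = A \<union> B - {v} then (-1) ^ ninv A B * face_sign (A \<union> B) v else (0::'k))"
    using True fA fB by (intro sum.union_disjoint) auto
  finally have h0: "(-1) ^ ninv A B * bd_basis (A \<union> B) t = (\<Sum>v\<in>A. if t = A \<union> B - {v} then (-1) ^ ninv A B * face_sign (A \<union> B) v else (0::'k))
     + (\<Sum>v\<in>B. if t = A \<union> B - {v} then (-1) ^ ninv A B * face_sign (A \<union> B) v else (0::'k))" .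
  have hA: "(\<Sum>v\<in>A. if t = A \<union> B - {v} then (-1) ^ ninv A B * face_sign (A \<union> B) v else (0::'k))
     = (\<Sum>v\<in>A. face_sign A v * join_basis (A - {v}, B) t)"
  proof (intro sum.cong refl)
    fix v assume v: "v \<in> A"
    have e1: "A \<union> B - {v} = (A - {v}) \<union> B" using v True by auto
    have "(-1::'k) ^ ninv A B * face_sign (A \<union> B) v = face_sign A v * (-1) ^ ninv (A - {v}) B"
      unfolding face_sign_def power_add[symmetric] N1[OF fA fB v] F1[OF fA fB True]
      by (rule neg1_eq) presburger
    then show "(if t = A \<union> B - {v} then (-1) ^ ninv A B * face_sign (A \<union> B) v else (0::'k))
      = face_sign A v * join_basis (A - {v}, B) t"
      unfolding join_basis_eq e1 using True by auto
  qed
  have hB: "(\<Sum>v\<in>B. if t = A \<union> B - {v} then (-1) ^ ninv A B * face_sign (A \<union> B) v else (0::'k))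
     = (-1) ^ card A * (\<Sum>v\<in>B. face_sign B v * join_basis (A, B - {v}) t)"
    unfolding sum_distrib_left
  proof (intro sum.cong refl)
    fix v assume v: "v \<in> B"
    have vA: "v \<notin> A" using v True by auto
    have e1: "A \<union> B - {v} = A \<union> (B - {v})" using vA by auto
    have "(-1::'k) ^ ninv A B * face_sign (A \<union> B) v = (-1) ^ card A * (face_sign B v * (-1) ^ ninv A (B - {v}))"
      unfolding face_sign_def power_add[symmetric] N2[OF fA fB v] F1[OF fA fB True] F2[OF fA, of v]
      by (rule neg1_eq) (simp add: vA, presburger)
    then show "(if t = A \<union> B - {v} then (-1) ^ ninv A B * face_sign (A \<union> B) v else (0::'k))
      = (-1) ^ card A * (face_sign B v * join_basis (A, B - {v}) t)"
      unfolding join_basis_eq e1 using True by auto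
  qed
  show ?thesis using True h0 hA hB by simp
next
  case False
  then obtain w where w: "w \<in> A" "w \<in> B" by auto
  show ?thesis
  proof (cases "A \<inter> B = {w}")
    case True
    have s1: "(\<Sum>v\<in>A. face_sign A v * join_basis (A - {v}, B) t) = face_sign A w * (join_basis (A - {w}, B) t :: 'k)"
    proof -
      have z: "(\<Sum>v\<in>A - {w}. face_sign A v * join_basis (A - {v}, B) t) = (0::'k)"
        using w by (intro sum.neutral) (auto simp: join_basis_eq)
      have "(\<Sum>v\<in>A. face_sign A v * join_basis (A - {v}, B) t :: 'k) = (\<lambda>v. face_sign A v * join_basis (A - {v}, B) t) w + (\<Sum>v\<in>A - {w}. face_sign A v * join_basis (A - {v}, B) t)"
        by (rule sum.remove[OF fA w(1)])
      also have "\<dots> = (\<lambda>v. face_sign A v * join_basis (A - {v}, B) t) w" using z by simp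
      finally show ?thesis by simp
    qed
    have s2: "(\<Sum>v\<in>B. face_sign B v * join_basis (A, B - {v}) t) = face_sign B w * (join_basis (A, B - {w}) t :: 'k)"
    proof -
      have z: "(\<Sum>v\<in>B - {w}. face_sign B v * join_basis (A, B - {v}) t) = (0::'k)"
        using w by (intro sum.neutral) (auto simp: join_basis_eq)
      have "(\<Sum>v\<in>B. face_sign B v * join_basis (A, B - {v}) t :: 'k) = (\<lambda>v. face_sign B v * join_basis (A, B - {v}) t) w + (\<Sum>v\<in>B - {w}. face_sign B v * join_basis (A, B - {v}) t)"
        by (rule sum.remove[OF fB w(2)])
      also have "\<dots> = (\<lambda>v. face_sign B v * join_basis (A, B - {v}) t) w" using z by simp
      finally show ?thesis by simp
    qed
    have j1: "join_basis (A - {w}, B) t = (if t = A \<union> B then (-1) ^ ninv (A - {w}) B else (0::'k))"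
    proof -
      have "(A - {w}) \<inter> B = {}" "(A - {w}) \<union> B = A \<union> B" using True w by auto
      then show ?thesis by (simp add: join_basis_eq)
    qed
    have j2: "join_basis (A, B - {w}) t = (if t = A \<union> B then (-1) ^ ninv A (B - {w}) else (0::'k))"
    proof -
      have "A \<inter> (B - {w}) = {}" "A \<union> (B - {w}) = A \<union> B" using True w by auto
      then show ?thesis by (simp add: join_basis_eq)
    qed
    have cA: "card A = card {a\<in>A. a < w} + card {a\<in>A. w < a} + 1" using F2[OF fA, of w] w(1) by simp
    have "face_sign A w * (-1) ^ ninv (A - {w}) B + (-1) ^ card A * (face_sign B w * (-1) ^ ninv A (B - {w})) = (0::'k)"
      unfolding face_sign_def power_add[symmetric]
      apply (rule neg1_opp)
      using N1[OF fA fB w(1)] N2[OF fA fB w(2)] cA by presburger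
    moreover have "A \<inter> B \<noteq> {}" using w by auto
    ultimately show ?thesis unfolding s1 s2 j1 j2 by (simp add: distrib_left distrib_right mult.assoc[symmetric])
  next
    case False
    then obtain w' where w': "w' \<in> A" "w' \<in> B" "w' \<noteq> w" using w by blast
    have "(\<Sum>v\<in>A. face_sign A v * join_basis (A - {v}, B) t) = (0::'k)"
      using w w' by (intro sum.neutral) (auto simp: join_basis_eq)
    moreover have "(\<Sum>v\<in>B. face_sign B v * join_basis (A, B - {v}) t) = (0::'k)"
      using w w' by (intro sum.neutral) (auto simp: join_basis_eq)
    ultimately show ?thesis using w by auto
  qed
qed

lemma simp_sub: "A \<in> simplices d \<Longrightarrow> A - X \<in> simplices d"
  by (auto simp: simplices_def)
lemma simp_Un: "A \<in> simplices d \<Longrightarrow> B \<in> simplices d \<Longrightarrow> A \<union> B \<in> simplices d"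
  by (auto simp: simplices_def)
lemma simp2_iff[simp]: "(a, b) \<in> simplices2 d \<longleftrightarrow> a \<in> simplices d \<and> b \<in> simplices d"
  by (simp add: simplices2_def)

lemma bd_join_basis:
  assumes "A \<in> simplices d" "B \<in> simplices d"
  shows "bd d (join_basis (A, B)) t =
    (if A \<inter> B = {} then (-1) ^ ninv A B * bd_basis (A \<union> B) t else (0::'k::comm_ring_1))"
proof (cases "A \<inter> B = {}")
  case True
  have "bd d (join_basis (A, B)) t = (\<Sum>S\<in>simplices d. (if S = A \<union> B then (-1) ^ ninv A B else 0) * (bd_basis S t :: 'k))"
    unfolding bd_def lin_ext_def join_basis_eq using True by (intro sum.cong refl) auto
  also have "\<dots> = (-1) ^ ninv A B * bd_basis (A \<union> B) t"
    by (rule delta_mult) (use assms simp_Un in auto)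
  finally show ?thesis using True by simp
next
  case False
  then show ?thesis unfolding bd_def lin_ext_def join_basis_eq by simp
qed

lemma bd2_basis_eq:
  "bd2_basis (A, B) q = (\<Sum>v\<in>A. if q = (A - {v}, B) then face_sign A v else 0)
     + (\<Sum>v\<in>B. if q = (A, B - {v}) then (-1) ^ card A * face_sign B v else (0::'k::comm_ring_1))"
proof (cases q)
  case (Pair a b)
  have 1: "(if b = B then bd_basis A a else 0) = (\<Sum>v\<in>A. if (a, b) = (A - {v}, B) then face_sign A v else (0::'k))"
    by (cases "b = B") (simp_all add: bd_basis_def)
  have 2: "(-1) ^ card A * (if a = A then bd_basis B b else 0) = (\<Sum>v\<in>B. if (a, b) = (A, B - {v}) then (-1) ^ card A * face_sign B v else (0::'k))"
    by (cases "a = A") (simp_all add: bd_basis_def sum_distrib_left if_distrib cong: if_cong)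
  show ?thesis unfolding Pair bd2_basis_def fst_conv snd_conv 1 2 ..
qed

lemma join_bd2_basis:
  assumes "A \<in> simplices d" "B \<in> simplices d"
  shows "join d (bd2_basis (A, B)) t = (\<Sum>v\<in>A. face_sign A v * join_basis (A - {v}, B) t)
      + (-1) ^ card A * (\<Sum>v\<in>B. face_sign B v * (join_basis (A, B - {v}) t :: 'k::comm_ring_1))"
proof -
  have "join d (bd2_basis (A, B)) t = (\<Sum>q\<in>simplices2 d. (\<Sum>v\<in>A. if q = (A - {v}, B) then face_sign A v else 0) * (join_basis q t :: 'k))
     + (\<Sum>q\<in>simplices2 d. (\<Sum>v\<in>B. if q = (A, B - {v}) then (-1) ^ card A * face_sign B v else 0) * (join_basis q t :: 'k))"
    unfolding join_def lin_ext_def bd2_basis_eq distrib_right sum.distrib ..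
  also have "\<dots> = (\<Sum>v\<in>A. face_sign A v * join_basis (A - {v}, B) t)
      + (\<Sum>v\<in>B. ((-1) ^ card A * face_sign B v) * (join_basis (A, B - {v}) t :: 'k))"
    using assms by (intro arg_cong2[where f="(+)"] pull) (auto simp: simp_sub)
  finally show ?thesis by (simp add: sum_distrib_left mult.assoc)
qed

lemma c5:
  "hom_diff (bd d) (bd2 d) 0 (join d) y = (\<lambda>_. (0::'k::comm_ring_1))"
proof -
  have "bd d (join d y) = lin_ext (simplices2 d) (\<lambda>p. join d (bd2_basis p)) (y :: 'k chain2)"
    unfolding join_def[of d] bd_def lin_ext_comp
  proof (rule lin_ext_cong)
    fix p assume p: "p \<in> simplices2 d"
    obtain A B where AB: "p = (A, B)" by (cases p)
    have A: "A \<in> simplices d" and B: "B \<in> simplices d" using p AB by auto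
    show "lin_ext (simplices d) bd_basis (join_basis p :: 'k chain) = lin_ext (simplices2 d) join_basis (bd2_basis p)"
    proof
      fix t
      show "lin_ext (simplices d) bd_basis (join_basis p :: 'k chain) t = lin_ext (simplices2 d) join_basis (bd2_basis p) t"
      proof -
        have "bd d (join_basis (A, B)) t = (join d (bd2_basis (A, B)) t :: 'k)"
          by (rule trans[OF trans[OF bd_join_basis[OF A B] join_bd_basis[OF simp_fin[OF A] simp_fin[OF B]]] sym[OF join_bd2_basis[OF A B]]])
        then show ?thesis by (simp add: AB bd_def join_def)
      qed
    qed
  qed
  moreover have "join d (bd2 d y) = lin_ext (simplices2 d) (\<lambda>p. join d (bd2_basis p)) y"
    unfolding bd2_def join_def[of d] lin_ext_comp ..
  ultimately show ?thesis unfolding hom_diff_def by simp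
qed

abbreviation lo :: "nat set \<Rightarrow> nat \<Rightarrow> nat set" where "lo S v \<equiv> {u\<in>S. u \<le> v}"
abbreviation hi :: "nat set \<Rightarrow> nat \<Rightarrow> nat set" where "hi S v \<equiv> {u\<in>S. v \<le> u}"

lemma coprod_basis_eq: "coprod_basis S p = (\<Sum>v\<in>S. if p = (lo S v, hi S v) then face_sign S v else (0::'k::comm_ring_1))"
  unfolding coprod_basis_def by (cases p) simp

lemma tele:
  assumes fS: "finite (S::nat set)"
  shows "(if q \<in> (\<lambda>v. ({x\<in>S. x < v}, hi S v)) ` S then 1 else 0)
       - (if q \<in> (\<lambda>v. (lo S v, {x\<in>S. v < x})) ` S then 1 else 0)
       = (if q = ({}, S) then 1 else 0) - (if q = (S, {}) then (1::'k::comm_ring_1) else 0)"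
proof -
  let ?a = "q \<in> (\<lambda>v. ({x\<in>S. x < v}, hi S v)) ` S"
  let ?b = "q \<in> (\<lambda>v. (lo S v, {x\<in>S. v < x})) ` S"
  have ab1: "?a \<Longrightarrow> ?b \<or> q = ({}, S)"
  proof -
    assume ?a
    then obtain v where v: "v \<in> S" "q = ({x\<in>S. x < v}, hi S v)" by auto
    show ?thesis
    proof (cases "{x\<in>S. x < v} = {}")
      case True
      then have "hi S v = S" by (auto simp: not_less[symmetric])
      then show ?thesis using v True by simp
    next
      case False
      define w where "w = Max {x\<in>S. x < v}"
      have fin: "finite {x\<in>S. x < v}" using fS by simp
      have w: "w \<in> S" "w < v" using Max_in[OF fin False] unfolding w_def by auto
      have wm: "\<And>x. x \<in> S \<Longrightarrow> x < v \<Longrightarrow> x \<le> w" unfolding w_def using fin by (auto intro: Max_ge)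
      have "lo S w = {x\<in>S. x < v}" using w wm by (auto simp: le_less_trans)
      moreover have "{x\<in>S. w < x} = hi S v" using w wm by (auto simp: not_le[symmetric])
      ultimately have "q = (\<lambda>v. (lo S v, {x\<in>S. v < x})) w" using v by simp
      then show ?thesis using w(1) by (intro disjI1 image_eqI)
    qed
  qed
  have ab2: "q = (S, {}) \<Longrightarrow> ?b \<or> q = ({}, S)"
  proof -
    assume q: "q = (S, {})"
    show ?thesis
    proof (cases "S = {}")
      case True then show ?thesis using q by simp
    next
      case False
      define w where "w = Max S"
      have w: "w \<in> S" "\<And>x. x \<in> S \<Longrightarrow> x \<le> w" unfolding w_def using fS False by auto
      have "lo S w = S" "{x\<in>S. w < x} = {}" using w by (auto simp: not_less)
      then have "q = (\<lambda>v. (lo S v, {x\<in>S. v < x})) w" using q by simp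
      then show ?thesis using w(1) by (intro disjI1 image_eqI)
    qed
  qed
  have ba1: "?b \<Longrightarrow> ?a \<or> q = (S, {})"
  proof -
    assume ?b
    then obtain v where v: "v \<in> S" "q = (lo S v, {x\<in>S. v < x})" by auto
    show ?thesis
    proof (cases "{x\<in>S. v < x} = {}")
      case True
      then have "lo S v = S" by (auto simp: not_less[symmetric])
      then show ?thesis using v True by simp
    next
      case False
      define w where "w = Min {x\<in>S. v < x}"
      have fin: "finite {x\<in>S. v < x}" using fS by simp
      have w: "w \<in> S" "v < w" using Min_in[OF fin False] unfolding w_def by auto
      have wm: "\<And>x. x \<in> S \<Longrightarrow> v < x \<Longrightarrow> w \<le> x" unfolding w_def using fin by (auto intro: Min_le)
      have "{x\<in>S. x < w} = lo S v" using w wm by (auto simp: not_le[symmetric] less_le_trans)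
      moreover have "hi S w = {x\<in>S. v < x}" using w wm by (auto simp: less_le_trans)
      ultimately have "q = (\<lambda>v. ({x\<in>S. x < v}, hi S v)) w" using v by simp
      then show ?thesis using w(1) by (intro disjI1 image_eqI)
    qed
  qed
  have ba2: "q = ({}, S) \<Longrightarrow> ?a \<or> q = (S, {})"
  proof -
    assume q: "q = ({}, S)"
    show ?thesis
    proof (cases "S = {}")
      case True then show ?thesis using q by simp
    next
      case False
      define w where "w = Min S"
      have w: "w \<in> S" "\<And>x. x \<in> S \<Longrightarrow> w \<le> x" unfolding w_def using fS False by auto
      have "{x\<in>S. x < w} = {}" "hi S w = S" using w by (auto simp: not_less)
      then have "q = (\<lambda>v. ({x\<in>S. x < v}, hi S v)) w" using q by simp
      then show ?thesis using w(1) by (intro disjI1 image_eqI)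
    qed
  qed
  have na: "?a \<Longrightarrow> q \<noteq> (S, {})" by auto
  have nb: "?b \<Longrightarrow> q \<noteq> ({}, S)" by auto
  show ?thesis
    using ab1 ab2 ba1 ba2 na nb
    by (cases ?a; cases ?b; cases "q = ({}, S)"; cases "q = (S, {})") simp_all
qed

lemma neg1_neg: "even m \<noteq> even n \<Longrightarrow> (-1::'k::comm_ring_1) ^ m = - ((-1) ^ n)"
  by (auto simp: minus_one_power_iff)

lemma card_lt_insert:
  assumes "finite (S::nat set)" "u \<in> S" "u < v"
  shows "card {x\<in>S. x < v} = card {x\<in>S - {u}. x < v} + 1"
proof -
  have "{x\<in>S. x < v} = insert u {x\<in>S - {u}. x < v}" using assms by auto
  then show ?thesis using assms(1) by simp
qed

lemma card_lo:
  assumes "finite (S::nat set)" "v \<in> S"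
  shows "card (lo S v) = card {x\<in>S. x < v} + 1"
proof -
  have "lo S v = insert v {x\<in>S. x < v}" using assms by auto
  then show ?thesis using assms(1) by simp
qed

lemma card_split:
  assumes "finite (S::nat set)" "v < u"
  shows "card {x\<in>S. x < u} = card {x\<in>S. x < v} + card {x\<in>hi S v. x < u}"
proof -
  have "{x\<in>S. x < u} = {x\<in>S. x < v} \<union> {x\<in>hi S v. x < u}" using assms by auto
  then show ?thesis using assms(1) by (simp add: card_Un_disjoint disjoint_iff)
qed

lemma cancel_pair:
  assumes fS: "finite (S::nat set)" and u: "u \<in> S" and v: "v \<in> S"
  shows "(if u < v then face_sign S v * (if q = (lo S v - {u}, hi S v) then face_sign (lo S v) u else 0) else 0)
    + (if v < u then face_sign S v * (if q = (lo S v, hi S v - {u}) then (-1) ^ card (lo S v) * face_sign (hi S v) u else 0) else 0)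
    + (if u \<noteq> v then face_sign S u * (if q = (lo (S - {u}) v, hi (S - {u}) v) then face_sign (S - {u}) v else 0) else (0::'k::comm_ring_1))
    = 0"
proof (cases "u < v")
  case True
  have e1: "lo (S - {u}) v = lo S v - {u}" "hi (S - {u}) v = hi S v" using True by auto
  have c1: "{x\<in>lo S v. x < u} = {x\<in>S. x < u}" using True by auto
  have sg: "face_sign S v * face_sign (lo S v) u = - (face_sign S u * (face_sign (S - {u}) v :: 'k))"
    unfolding face_sign_def power_add[symmetric] c1 card_lt_insert[OF fS u True]
    by (rule neg1_neg) presburger
  show ?thesis using True sg unfolding e1 by (cases "q = (lo S v - {u}, hi S v)") simp_all
next
  case False
  show ?thesis
  proof (cases "v < u")
    case True
    have e1: "lo (S - {u}) v = lo S v" "hi (S - {u}) v = hi S v - {u}" using True by auto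
    have c3: "{x\<in>S - {u}. x < v} = {x\<in>S. x < v}" using True by auto
    have sg: "face_sign S v * ((-1) ^ card (lo S v) * face_sign (hi S v) u) = - (face_sign S u * (face_sign (S - {u}) v :: 'k))"
      unfolding face_sign_def power_add[symmetric] c3 card_lo[OF fS v] card_split[OF fS True]
      by (rule neg1_neg) presburger
    show ?thesis using True False sg unfolding e1 by (cases "q = (lo S v, hi S v - {u})") simp_all
  next
    case False
    then have "u = v" using \<open>\<not> u < v\<close> by simp
    then show ?thesis by simp
  qed
qed

lemma lo_simp: "S \<in> simplices d \<Longrightarrow> lo S v \<in> simplices d"
  by (auto simp: simplices_def)
lemma hi_simp: "S \<in> simplices d \<Longrightarrow> hi S v \<in> simplices d"
  by (auto simp: simplices_def)

lemma coprod_hom_basis: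
  assumes S: "S \<in> simplices d"
  shows "bd2 d (coprod_basis S) q + coprod d (bd_basis S) q
    = (if q = ({}, S) then 1 else 0) - (if q = (S, {}) then (1::'k::comm_ring_1) else 0)"
proof -
  have fS: "finite S" using simp_fin[OF S] .
  define A where "A v u = face_sign S v * (if q = (lo S v - {u}, hi S v) then face_sign (lo S v) u else (0::'k))" for v u
  define B where "B v u = face_sign S v * (if q = (lo S v, hi S v - {u}) then (-1) ^ card (lo S v) * face_sign (hi S v) u else (0::'k))" for v u
  define C where "C w v = face_sign S w * (if q = (lo (S - {w}) v, hi (S - {w}) v) then face_sign (S - {w}) v else (0::'k))" for w v
  have s1: "bd2 d (coprod_basis S) q = (\<Sum>v\<in>S. face_sign S v * (bd2_basis (lo S v, hi S v) q :: 'k))"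
    unfolding bd2_def lin_ext_def coprod_basis_eq
    by (rule pull) (use S lo_simp hi_simp in auto)
  also have "\<dots> = (\<Sum>v\<in>S. (\<Sum>u\<in>lo S v. A v u) + (\<Sum>u\<in>hi S v. B v u))"
    unfolding bd2_basis_eq A_def B_def distrib_left sum_distrib_left
    by (intro sum.cong refl arg_cong2[where f="(+)"])
  also have "\<dots> = (\<Sum>v\<in>S. (A v v + B v v) + ((\<Sum>u\<in>S. if u < v then A v u else 0) + (\<Sum>u\<in>S. if v < u then B v u else 0)))"
  proof (intro sum.cong refl)
    fix v assume v: "v \<in> S"
    have l: "lo S v = insert v {u\<in>S. u < v}" using v by auto
    have h: "hi S v = insert v {u\<in>S. v < u}" using v by auto
    show "(\<Sum>u\<in>lo S v. A v u) + (\<Sum>u\<in>hi S v. B v u) = (A v v + B v v) + ((\<Sum>u\<in>S. if u < v then A v u else 0) + (\<Sum>u\<in>S. if v < u then B v u else 0))"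
      unfolding l h using fS by (simp add: sum.inter_filter)
  qed
  finally have s1': "bd2 d (coprod_basis S) q = (\<Sum>v\<in>S. A v v + B v v)
      + (\<Sum>v\<in>S. (\<Sum>u\<in>S. if u < v then A v u else 0) + (\<Sum>u\<in>S. if v < u then B v u else 0))"
    by (simp add: sum.distrib)
  have "coprod d (bd_basis S) q = (\<Sum>w\<in>S. face_sign S w * (coprod_basis (S - {w}) q :: 'k))"
    unfolding coprod_def lin_ext_def bd_basis_def
    by (rule pull) (use S simp_sub in auto)
  also have "\<dots> = (\<Sum>w\<in>S. \<Sum>v\<in>S - {w}. C w v)"
    unfolding coprod_basis_eq C_def sum_distrib_left by (intro sum.cong refl)
  also have "\<dots> = (\<Sum>w\<in>S. \<Sum>v\<in>S. if w \<noteq> v then C w v else 0)"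
  proof (rule sum.cong[OF refl])
    fix w assume "w \<in> S"
    have "S - {w} = {v\<in>S. w \<noteq> v}" by auto
    then show "(\<Sum>v\<in>S - {w}. C w v) = (\<Sum>v\<in>S. if w \<noteq> v then C w v else 0)"
      using fS by (simp add: sum.inter_filter)
  qed
  also have "\<dots> = (\<Sum>v\<in>S. \<Sum>u\<in>S. if u \<noteq> v then C u v else 0)"
    by (rule sum.swap)
  finally have s2: "coprod d (bd_basis S) q = (\<Sum>v\<in>S. \<Sum>u\<in>S. if u \<noteq> v then C u v else 0)" .
  have s3: "(\<Sum>v\<in>S. (\<Sum>u\<in>S. if u < v then A v u else 0) + (\<Sum>u\<in>S. if v < u then B v u else 0))
      + (\<Sum>v\<in>S. \<Sum>u\<in>S. if u \<noteq> v then C u v else 0) = 0"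
  proof -
    have "(\<Sum>v\<in>S. (\<Sum>u\<in>S. if u < v then A v u else 0) + (\<Sum>u\<in>S. if v < u then B v u else 0))
      + (\<Sum>v\<in>S. \<Sum>u\<in>S. if u \<noteq> v then C u v else 0)
      = (\<Sum>v\<in>S. \<Sum>u\<in>S. (if u < v then A v u else 0) + (if v < u then B v u else 0) + (if u \<noteq> v then C u v else 0))"
      by (simp add: sum.distrib)
    also have "\<dots> = 0"
      by (intro sum.neutral ballI) (unfold A_def B_def C_def, rule cancel_pair[OF fS], assumption+)
    finally show ?thesis .
  qed
  have AA: "A v v = (if q = ({x\<in>S. x < v}, hi S v) then 1 else 0)" if v: "v \<in> S" for v
  proof -
    have e: "lo S v - {v} = {x\<in>S. x < v}" by auto
    have f: "face_sign (lo S v) v = (face_sign S v :: 'k)" unfolding face_sign_def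
      by (rule arg_cong[where f="\<lambda>n. (-1) ^ n"], rule arg_cong[where f=card]) auto
    have "face_sign S v * face_sign S v = (1::'k)" unfolding face_sign_def power_add[symmetric]
      by (simp add: minus_one_power_iff)
    then show ?thesis unfolding A_def e f by simp
  qed
  have BB: "B v v = - (if q = (lo S v, {x\<in>S. v < x}) then 1 else 0)" if v: "v \<in> S" for v
  proof -
    have e: "hi S v - {v} = {x\<in>S. v < x}" by auto
    have f: "face_sign (hi S v) v = (1 :: 'k)" unfolding face_sign_def by (simp add: not_le[symmetric])
    have "face_sign S v * (-1) ^ card (lo S v) = (-1::'k)" unfolding face_sign_def power_add[symmetric] card_lo[OF fS v]
      by (simp add: minus_one_power_iff)
    then show ?thesis unfolding B_def e f by simp
  qed
  have inj1: "inj_on (\<lambda>v. ({x\<in>S. x < v}, hi S v)) S"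
  proof (rule inj_onI)
    fix v w assume "v \<in> S" "w \<in> S" "({x\<in>S. x < v}, hi S v) = ({x\<in>S. x < w}, hi S w)"
    then have "v \<in> hi S w" "w \<in> hi S v" by auto
    then show "v = w" by auto
  qed
  have inj2: "inj_on (\<lambda>v. (lo S v, {x\<in>S. v < x})) S"
  proof (rule inj_onI)
    fix v w assume "v \<in> S" "w \<in> S" "(lo S v, {x\<in>S. v < x}) = (lo S w, {x\<in>S. w < x})"
    then have "v \<in> lo S w" "w \<in> lo S v" by auto
    then show "v = w" by auto
  qed
  have s4: "(\<Sum>v\<in>S. A v v + B v v) = (if q \<in> (\<lambda>v. ({x\<in>S. x < v}, hi S v)) ` S then 1 else 0)
       - (if q \<in> (\<lambda>v. (lo S v, {x\<in>S. v < x})) ` S then 1 else 0)"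
  proof -
    have "(\<Sum>v\<in>S. A v v + B v v) = (\<Sum>v\<in>S. if q = ({x\<in>S. x < v}, hi S v) then 1 else 0)
       - (\<Sum>v\<in>S. if q = (lo S v, {x\<in>S. v < x}) then 1 else 0)"
      by (simp add: AA BB sum_subtractf)
    then show ?thesis using sum_indic_inj[OF fS inj1, of q "1::'k"] sum_indic_inj[OF fS inj2, of q "1::'k"] by simp
  qed
  have "bd2 d (coprod_basis S) q + coprod d (bd_basis S) q = (\<Sum>v\<in>S. A v v + B v v)"
    unfolding s1' s2 using s3 by (simp only: add.assoc add_0_right)
  also have "\<dots> = (if q = ({}, S) then 1 else 0) - (if q = (S, {}) then (1::'k) else 0)"
    unfolding s4 by (rule tele[OF fS])
  finally show ?thesis .
qed

lemma sum_eps_l: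
  assumes "x \<in> chains d"
  shows "(\<Sum>S\<in>simplices d. x S * (if q = ({}, S) then 1 else 0)) = eps_tensor_id x (q::nat set \<times> nat set)"
proof (cases q)
  case (Pair a b)
  show ?thesis unfolding Pair eps_tensor_id_def
    using chains_out[OF assms, of b] by (auto simp: if_distrib cong: if_cong)
qed

lemma sum_eps_r:
  assumes "x \<in> chains d"
  shows "(\<Sum>S\<in>simplices d. x S * (if q = (S, {}) then 1 else 0)) = id_tensor_eps x (q::nat set \<times> nat set)"
proof (cases q)
  case (Pair a b)
  show ?thesis unfolding Pair id_tensor_eps_def
    using chains_out[OF assms, of a] by (auto simp: if_distrib cong: if_cong)
qed

lemma c6:
  assumes x: "x \<in> chains d"
  shows "hom_diff (bd2 d) (bd d) 1 (coprod d) x = (\<lambda>q. eps_tensor_id x q - id_tensor_eps (x :: 'k::comm_ring_1 chain) q)"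
proof
  fix q
  have 1: "bd2 d (coprod d x) q = (\<Sum>S\<in>simplices d. x S * bd2 d (coprod_basis S) q)"
    unfolding coprod_def bd2_def[of d] lin_ext_comp by (simp add: lin_ext_def)
  have 2: "coprod d (bd d x) q = (\<Sum>S\<in>simplices d. x S * coprod d (bd_basis S) q)"
    unfolding bd_def coprod_def[of d] lin_ext_comp by (simp add: lin_ext_def)
  have "hom_diff (bd2 d) (bd d) 1 (coprod d) x q = (\<Sum>S\<in>simplices d. x S * (bd2 d (coprod_basis S) q + coprod d (bd_basis S) q))"
    unfolding hom_diff_def 1 2 by (simp add: distrib_left sum.distrib)
  also have "\<dots> = (\<Sum>S\<in>simplices d. x S * ((if q = ({}, S) then 1 else 0) - (if q = (S, {}) then 1 else 0)))"
    by (intro sum.cong refl) (simp add: coprod_hom_basis)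
  also have "\<dots> = eps_tensor_id x q - id_tensor_eps x q"
    unfolding right_diff_distrib sum_subtractf sum_eps_l[OF x] sum_eps_r[OF x] ..
  finally show "hom_diff (bd2 d) (bd d) 1 (coprod d) x q = eps_tensor_id x q - id_tensor_eps x q" .
qed

lemma simp_verts: "S \<in> simplices d \<Longrightarrow> S \<subseteq> verts d"
  by (simp add: simplices_def)

lemma img_simp: "aug_simplicial_map d e f \<Longrightarrow> S \<in> simplices d \<Longrightarrow> f ` S \<in> simplices e"
  by (auto simp: aug_simplicial_map_def simplices_def)

lemma mono_sub: "aug_simplicial_map d e f \<Longrightarrow> S \<in> simplices d \<Longrightarrow> x \<in> S \<Longrightarrow> y \<in> S \<Longrightarrow> x \<le> y \<Longrightarrow> f x \<le> f y"
  unfolding aug_simplicial_map_def mono_on_def simplices_def by blast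

lemma strict_sub:
  assumes "aug_simplicial_map d e f" "S \<in> simplices d" "inj_on f S" "x \<in> S" "y \<in> S"
  shows "f x < f y \<longleftrightarrow> x < y"
proof
  assume "x < y"
  then have "f x \<le> f y" "f x \<noteq> f y" using mono_sub[OF assms(1,2,4,5)] assms(3-5) by (auto dest: inj_onD)
  then show "f x < f y" by simp
next
  assume "f x < f y"
  then show "x < y" using mono_sub[OF assms(1,2,5,4)] by (meson not_le)
qed

lemma pb_eq: "push_basis f A a = (if a = f ` A then (if inj_on f A then 1 else 0) else 0)"
  by (simp add: push_basis_def)

lemma ninv_img:
  assumes m: "aug_simplicial_map d e f" and U: "A \<union> B \<in> simplices d" and i: "inj_on f (A \<union> B)"
  shows "ninv (f ` A) (f ` B) = ninv A B"
proof -
  let ?X = "{(a, b). a \<in> A \<and> b \<in> B \<and> b < a}"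
  have st: "\<And>x y. x \<in> A \<union> B \<Longrightarrow> y \<in> A \<union> B \<Longrightarrow> f x < f y \<longleftrightarrow> x < y"
    using strict_sub[OF m U i] .
  have "{(a, b). a \<in> f ` A \<and> b \<in> f ` B \<and> b < a} = (\<lambda>(a, b). (f a, f b)) ` ?X"
    using st by (auto simp: image_iff) 
  moreover have "inj_on (\<lambda>(a, b). (f a, f b)) ?X"
    using i by (auto simp: inj_on_def)
  ultimately show ?thesis unfolding ninv_def by (simp add: card_image)
qed

lemma push_join_basis:
  assumes "A \<in> simplices d" "B \<in> simplices d"
  shows "push d f (join_basis (A, B)) t =
    (if A \<inter> B = {} then (-1) ^ ninv A B * push_basis f (A \<union> B) t else (0::'k::comm_ring_1))"
proof (cases "A \<inter> B = {}")
  case True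
  have "push d f (join_basis (A, B)) t = (\<Sum>S\<in>simplices d. (if S = A \<union> B then (-1) ^ ninv A B else 0) * (push_basis f S t :: 'k))"
    unfolding push_def lin_ext_def join_basis_eq using True by (intro sum.cong refl) auto
  also have "\<dots> = (-1) ^ ninv A B * push_basis f (A \<union> B) t"
    by (rule delta_mult) (use assms simp_Un in auto)
  finally show ?thesis using True by simp
next
  case False
  then show ?thesis unfolding push_def lin_ext_def join_basis_eq by simp
qed

lemma join_push2_basis:
  assumes m: "aug_simplicial_map d e f" and A: "A \<in> simplices d" and B: "B \<in> simplices d"
  shows "join e (\<lambda>q. push_basis f A (fst q) * push_basis f B (snd q)) t =
    (if inj_on f A \<and> inj_on f B then join_basis (f ` A, f ` B) t else (0::'k::comm_ring_1))"
proof -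
  have "join e (\<lambda>q. push_basis f A (fst q) * push_basis f B (snd q)) t
     = (\<Sum>q\<in>simplices2 e. (if q = (f ` A, f ` B) then (if inj_on f A \<and> inj_on f B then 1 else 0) else 0) * (join_basis q t :: 'k))"
    unfolding join_def lin_ext_def pb_eq by (intro sum.cong refl) (auto simp: prod_eq_iff)
  also have "\<dots> = (if inj_on f A \<and> inj_on f B then 1 else 0) * join_basis (f ` A, f ` B) t"
    by (rule delta_mult) (use img_simp[OF m A] img_simp[OF m B] in auto)
  finally show ?thesis by simp
qed

lemma nat_join_basis:
  assumes m: "aug_simplicial_map d e f" and A: "A \<in> simplices d" and B: "B \<in> simplices d"
  shows "push d f (join_basis (A, B)) t = (join e (\<lambda>q. push_basis f A (fst q) * push_basis f B (snd q)) (t :: nat set) :: 'k::comm_ring_1)"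
proof -
  have U: "A \<union> B \<in> simplices d" using A B simp_Un by blast
  have "(if A \<inter> B = {} then (-1) ^ ninv A B * push_basis f (A \<union> B) t else (0::'k))
      = (if inj_on f A \<and> inj_on f B then join_basis (f ` A, f ` B) t else 0)"
  proof (cases "A \<inter> B = {}")
    case dj: True
    show ?thesis
    proof (cases "inj_on f (A \<union> B)")
      case True
      have iA: "inj_on f A" "inj_on f B" using True by (auto intro: inj_on_subset)
      have "f ` A \<inter> f ` B = {}" using True dj by (auto simp: inj_on_def)
      then show ?thesis using dj iA True ninv_img[OF m U True] by (simp add: join_basis_eq push_basis_def image_Un)
    next
      case False
      have "\<not> (inj_on f A \<and> inj_on f B) \<or> f ` A \<inter> f ` B \<noteq> {}"
      proof (rule ccontr)
        assume "\<not> ?thesis"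
        then have "inj_on f A" "inj_on f B" "f ` A \<inter> f ` B = {}" by auto
        then have "inj_on f (A \<union> B)" by (auto simp: inj_on_Un)
        then show False using False by simp
      qed
      then show ?thesis using dj False by (auto simp: join_basis_eq push_basis_def)
    qed
  next
    case False
    then obtain w where "w \<in> A" "w \<in> B" by auto
    then have "f ` A \<inter> f ` B \<noteq> {}" by auto
    then show ?thesis using False by (simp add: join_basis_eq)
  qed
  then show ?thesis by (rule trans[OF trans[OF push_join_basis[OF A B]] sym[OF join_push2_basis[OF m A B]]])
qed

lemma n2:
  assumes m: "aug_simplicial_map d e f"
  shows "push d f (join d y) = join e (push2 d f (y :: 'k::comm_ring_1 chain2))"
proof -
  have "push d f (join d y) = lin_ext (simplices2 d) (\<lambda>p. push d f (join_basis p)) y"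
    unfolding join_def[of d] push_def lin_ext_comp ..
  also have "\<dots> = lin_ext (simplices2 d) (\<lambda>p. join e (\<lambda>q. push_basis f (fst p) (fst q) * push_basis f (snd p) (snd q))) y"
  proof (rule lin_ext_cong)
    fix p assume p: "p \<in> simplices2 d"
    obtain A B where AB: "p = (A, B)" by (cases p)
    have A: "A \<in> simplices d" and B: "B \<in> simplices d" using p AB by auto
    show "push d f (join_basis p :: 'k chain) = join e (\<lambda>q. push_basis f (fst p) (fst q) * push_basis f (snd p) (snd q))"
      using nat_join_basis[OF m A B] unfolding AB by auto
  qed
  also have "\<dots> = join e (push2 d f y)"
    unfolding push2_def join_def[of e] lin_ext_comp ..
  finally show ?thesis .
qed

lemma push2_coprod_basis:
  assumes S: "S \<in> simplices d"
  shows "push2 d f (coprod_basis S) q = (\<Sum>v\<in>S. face_sign S v * (push_basis f (lo S v) (fst q) * push_basis f (hi S v) (snd q) :: 'k::comm_ring_1))"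
  unfolding push2_def lin_ext_def coprod_basis_eq
  by (subst pull[where I="simplices2 d" and h="\<lambda>v. (lo S v, hi S v)" and V=S and c="face_sign S" and G="\<lambda>p. push_basis f (fst p) (fst q) * push_basis f (snd p) (snd q)"])
     (use S lo_simp hi_simp in auto)

lemma coprod_push_basis:
  assumes m: "aug_simplicial_map d e f" and S: "S \<in> simplices d"
  shows "coprod e (push_basis f S) q = (if inj_on f S then coprod_basis (f ` S) q else (0::'k::comm_ring_1))"
proof -
  have "coprod e (push_basis f S) q = (\<Sum>T\<in>simplices e. (if T = f ` S then (if inj_on f S then 1 else 0) else 0) * (coprod_basis T q :: 'k))"
    unfolding coprod_def lin_ext_def pb_eq ..
  also have "\<dots> = (if inj_on f S then 1 else 0) * coprod_basis (f ` S) q"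
    by (rule delta_mult) (use img_simp[OF m S] in auto)
  finally show ?thesis by simp
qed

lemma nat_coprod_basis:
  assumes m: "aug_simplicial_map d e f" and S: "S \<in> simplices d"
  shows "push2 d f (coprod_basis S) q = (coprod e (push_basis f S) q :: 'k::comm_ring_1)"
proof (cases "inj_on f S")
  case True
  have st: "\<And>x y. x \<in> S \<Longrightarrow> y \<in> S \<Longrightarrow> f x < f y \<longleftrightarrow> x < y" using strict_sub[OF m S True] .
  have fS: "finite S" using simp_fin[OF S] .
  have "coprod_basis (f ` S) q = (\<Sum>w\<in>f ` S. if fst q = lo (f ` S) w \<and> snd q = hi (f ` S) w then face_sign (f ` S) w else (0::'k))"
    unfolding coprod_basis_def ..
  also have "\<dots> = (\<Sum>v\<in>S. if fst q = lo (f ` S) (f v) \<and> snd q = hi (f ` S) (f v) then face_sign (f ` S) (f v) else (0::'k))"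
    by (rule sum.reindex[OF True, unfolded comp_def])
  also have "\<dots> = (\<Sum>v\<in>S. face_sign S v * (push_basis f (lo S v) (fst q) * push_basis f (hi S v) (snd q) :: 'k))"
  proof (rule sum.cong[OF refl])
    fix v assume v: "v \<in> S"
    have l: "lo (f ` S) (f v) = f ` lo S v" using st v by (auto simp: not_less[symmetric])
    have h: "hi (f ` S) (f v) = f ` hi S v" using st v by (auto simp: not_less[symmetric])
    have c: "{y\<in>f ` S. y < f v} = f ` {x\<in>S. x < v}" using st v by auto
    have fs: "face_sign (f ` S) (f v) = (face_sign S v :: 'k)"
      unfolding face_sign_def c using True by (subst card_image) (auto intro: inj_on_subset)
    have il: "inj_on f (lo S v)" "inj_on f (hi S v)" using True by (auto intro: inj_on_subset)
    show "(if fst q = lo (f ` S) (f v) \<and> snd q = hi (f ` S) (f v) then face_sign (f ` S) (f v) else (0::'k))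
      = face_sign S v * (push_basis f (lo S v) (fst q) * push_basis f (hi S v) (snd q))"
      unfolding l h fs using il by (simp add: pb_eq)
  qed
  finally have X: "coprod_basis (f ` S) q = (\<Sum>v\<in>S. face_sign S v * (push_basis f (lo S v) (fst q) * push_basis f (hi S v) (snd q) :: 'k))" .
  show ?thesis using True by (simp add: X coprod_push_basis[OF m S] push2_coprod_basis[OF S])
next
  case False
  then obtain s s' where ss: "s \<in> S" "s' \<in> S" "s \<noteq> s'" "f s = f s'" by (auto simp: inj_on_def)
  obtain a b where ab: "a \<in> S" "b \<in> S" "a < b" "f a = f b"
    using ss by (cases "s < s'") (auto simp: neq_iff intro: that[of s s'] that[of s' s] dest: sym)
  have z: "\<not> (inj_on f (lo S v) \<and> inj_on f (hi S v))" if v: "v \<in> S" for v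
  proof (cases "b \<le> v")
    case True
    then have "a \<in> lo S v" "b \<in> lo S v" using ab by auto
    then have "\<not> inj_on f (lo S v)" using ab inj_onD[of f "lo S v" a b] by auto
    then show ?thesis by blast
  next
    case nb: False
    show ?thesis
    proof (cases "v \<le> a")
      case True
      then have "a \<in> hi S v" "b \<in> hi S v" using ab by auto
      then have "\<not> inj_on f (hi S v)" using ab inj_onD[of f "hi S v" a b] by auto
      then show ?thesis by blast
    next
      case False
      have "f a \<le> f v" using mono_sub[OF m S ab(1) v] False by simp
      moreover have "f v \<le> f b" using mono_sub[OF m S v ab(2)] nb by simp
      ultimately have "f v = f a" using ab by simp
      moreover have "a \<in> lo S v" "v \<in> lo S v" "a \<noteq> v" using ab v False by auto
      ultimately have "\<not> inj_on f (lo S v)" using inj_onD[of f "lo S v" v a] by auto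
      then show ?thesis by blast
    qed
  qed
  have "push2 d f (coprod_basis S) q = (0::'k)"
    unfolding push2_coprod_basis[OF S] by (intro sum.neutral ballI) (auto simp: pb_eq dest: z)
  then show ?thesis using coprod_push_basis[OF m S, of q] False by simp
qed

lemma n3:
  assumes m: "aug_simplicial_map d e f"
  shows "push2 d f (coprod d x) = coprod e (push d f (x :: 'k::comm_ring_1 chain))"
proof -
  have "push2 d f (coprod d x) = lin_ext (simplices d) (\<lambda>S. push2 d f (coprod_basis S)) x"
    unfolding coprod_def[of d] push2_def lin_ext_comp ..
  also have "\<dots> = lin_ext (simplices d) (\<lambda>S. coprod e (push_basis f S)) x"
  proof (rule lin_ext_cong)
    fix S assume S: "S \<in> simplices d"
    show "push2 d f (coprod_basis S :: 'k chain2) = coprod e (push_basis f S)"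
      by (rule ext) (rule nat_coprod_basis[OF m S])
  qed
  also have "\<dots> = coprod e (push d f x)"
    unfolding push_def coprod_def[of e] lin_ext_comp ..
  finally show ?thesis .
qed

theorem theoremB2:
  fixes d :: nat
  shows "(\<forall>c :: unit \<Rightarrow> 'k::comm_ring_1. \<forall>T. eps_map c T \<noteq> 0 \<longrightarrow> card T = 0)
   \<and> (\<forall>p\<in>simplices2 d. \<forall>T. (join_basis p T :: 'k) \<noteq> 0 \<longrightarrow> card T = card (fst p) + card (snd p))
   \<and> (\<forall>S\<in>simplices d. \<forall>q. (coprod_basis S q :: 'k) \<noteq> 0 \<longrightarrow> card (fst q) + card (snd q) = card S + 1)
   \<and> (\<forall>c :: unit \<Rightarrow> 'k. hom_diff (bd d) (\<lambda>c. \<lambda>_. 0) 0 eps_map c = (\<lambda>_. 0))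
   \<and> (\<forall>y \<in> (chains2 d :: 'k chain2 set). hom_diff (bd d) (bd2 d) 0 (join d) y = (\<lambda>_. 0))
   \<and> (\<forall>x \<in> (chains d :: 'k chain set).
        hom_diff (bd2 d) (bd d) 1 (coprod d) x = (\<lambda>q. eps_tensor_id x q - id_tensor_eps x q))
   \<and> (\<forall>c :: unit \<Rightarrow> 'k. coprod d (eps_map c) = (\<lambda>_. 0))
   \<and> (\<forall>x \<in> (chains d :: 'k chain set). join d (eps_tensor_id x) = x)
   \<and> (\<forall>x \<in> (chains d :: 'k chain set). join d (id_tensor_eps x) = x)
   \<and> (\<forall>e f. aug_simplicial_map d e f \<longrightarrow>
        (\<forall>c :: unit \<Rightarrow> 'k. push d f (eps_map c) = eps_map c)
      \<and> (\<forall>y \<in> (chains2 d :: 'k chain2 set). push d f (join d y) = join e (push2 d f y))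
      \<and> (\<forall>x \<in> (chains d :: 'k chain set). push2 d f (coprod d x) = coprod e (push d f x)))"
  proof (intro conjI allI ballI impI)
  show "\<And>c T. eps_map c T \<noteq> 0 \<Longrightarrow> card T = 0" by (rule c1)
  show "\<And>p T. p \<in> simplices2 d \<Longrightarrow> (join_basis p T :: 'k) \<noteq> 0 \<Longrightarrow> card T = card (fst p) + card (snd p)"
    by (rule c2)
  show "\<And>S q. S \<in> simplices d \<Longrightarrow> (coprod_basis S q :: 'k) \<noteq> 0 \<Longrightarrow> card (fst q) + card (snd q) = card S + 1"
    by (rule c3)
  show "\<And>x. x \<in> (chains d :: 'k chain set) \<Longrightarrow>
        hom_diff (bd2 d) (bd d) 1 (coprod d) x = (\<lambda>q. eps_tensor_id x q - id_tensor_eps x q)"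
    by (rule c6)
qed (auto simp: c4 c5 c7 c8 c9 n1 n2 n3)

end
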